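(* Every binary network that admits an HGT-consistent labelling is orchard.
   Context: A (directed phylogenetic) network on a finite taxa set $X$ is a directed acyclic graph without parallel arcs whose nodes are of the following types: a unique root (indegree 0, outdegree 1); tree nodes (indegree 1, outdegree at least 2); reticulations (indegree at least 2, outdegree 1); leaves (indegree 1, outdegree 0), the leaves being bijectively labelled by $X$. Non-leaf nodes are called internal. A network is binary if every tree node and every reticulation has total degree (indegree plus outdegree) exactly 3. A tree is a network without reticulations. Orchard networks: An ordered pair of leaves $(x,y)$ is a cherry if $x$ and $y$ have a common parent; it is a reticulated cherry if the parent $p_x$ of $x$ is a reticulation and $p_x$ and $y$ have a common parent. Let $p_x,p_y$ be the parents of $x,y$. Reducing $(x,y)$ in a network $N$: if $(x,y)$ is a cherry, delete $x$ and suppress $p_x$ if it now has indegree 1 and outdegree 1; if $(x,y)$ is a reticulated cherry, delete the arc $(p_y,p_x)$ and suppress any resulting node of indegree 1 and outdegree 1; otherwise do nothing. (Suppressing a node $v$ with one parent $u$ and one child $w$ means deleting $v$ and adding the arc $(u,w)$.) For a sequence $S$ of ordered pairs, $NS$ denotes the result of reducing the pairs of $S$ in order. $N$ is orchard if there is a sequence $S$ such that $NS$ is a tree with exactly one leaf. HGT-consistent labelling: Let $N$ be a binary network with node set $V$. An HGT-consistent labelling of $N$ is a map $t:V\to\mathbb{R}$ such that (1) for every arc $(u,v)$, $t(u)\le t(v)$, and equality is allowed only if $v$ is a reticulation; (2) every internal node $u$ has a child $v$ with $t(u)<t(v)$; (3) for every reticulation $r$ with parents $u$ and $v$, exactly one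 of $t(u)=t(r)$ and $t(v)=t(r)$ holds. *)

theory Defs
  imports Complex_Main
begin

text \<open>A directed graph is given by a node set V and an arc set A (a set of pairs,
so there are no parallel arcs). Leaves are identified with their (unique) labels,
so the taxa set X is the set of leaves.\<close>

type_synonym 'a graph = "'a set \<times> ('a \<times> 'a) set"

definition parents :: "('a \<times> 'a) set \<Rightarrow> 'a \<Rightarrow> 'a set" where
  "parents A v = {u. (u, v) \<in> A}"

definition children :: "('a \<times> 'a) set \<Rightarrow> 'a \<Rightarrow> 'a set" where
  "children A v = {w. (v, w) \<in> A}"

definition indeg :: "('a \<times> 'a) set \<Rightarrow> 'a \<Rightarrow> nat" where
  "indeg A v = card (parents A v)"

definition outdeg :: "('a \<times> 'a) set \<Rightarrow> 'a \<Rightarrow> nat" where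
  "outdeg A v = card (children A v)"

definition is_root :: "'a graph \<Rightarrow> 'a \<Rightarrow> bool" where
  "is_root N v \<longleftrightarrow> v \<in> fst N \<and> indeg (snd N) v = 0 \<and> outdeg (snd N) v = 1"

definition is_tree_node :: "'a graph \<Rightarrow> 'a \<Rightarrow> bool" where
  "is_tree_node N v \<longleftrightarrow> v \<in> fst N \<and> indeg (snd N) v = 1 \<and> outdeg (snd N) v \<ge> 2"

definition is_reticulation :: "'a graph \<Rightarrow> 'a \<Rightarrow> bool" where
  "is_reticulation N v \<longleftrightarrow> v \<in> fst N \<and> indeg (snd N) v \<ge> 2 \<and> outdeg (snd N) v = 1"

definition is_leaf :: "'a graph \<Rightarrow> 'a \<Rightarrow> bool" where
  "is_leaf N v \<longleftrightarrow> v \<in> fst N \<and> indeg (snd N) v = 1 \<and> outdeg (snd N) v = 0"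

definition leaves :: "'a graph \<Rightarrow> 'a set" where
  "leaves N = {v. is_leaf N v}"

definition is_network :: "'a graph \<Rightarrow> bool" where
  "is_network N \<longleftrightarrow>
     finite (fst N) \<and> snd N \<subseteq> fst N \<times> fst N \<and> acyclic (snd N) \<and>
     (\<exists>!r. is_root N r) \<and>
     (\<forall>v \<in> fst N. is_root N v \<or> is_tree_node N v \<or> is_reticulation N v \<or> is_leaf N v)"

definition is_binary :: "'a graph \<Rightarrow> bool" where
  "is_binary N \<longleftrightarrow> is_network N \<and>
     (\<forall>v. (is_tree_node N v \<or> is_reticulation N v) \<longrightarrow>
           indeg (snd N) v + outdeg (snd N) v = 3)"

definition is_tree :: "'a graph \<Rightarrow> bool" where
  "is_tree N \<longleftrightarrow> is_network N \<and> (\<forall>v. \<not> is_reticulation N v)"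

text \<open>The unique parent of a leaf (or of a node with indegree one).\<close>
definition par :: "'a graph \<Rightarrow> 'a \<Rightarrow> 'a" where
  "par N v = (THE u. (u, v) \<in> snd N)"

definition suppress :: "'a \<Rightarrow> 'a graph \<Rightarrow> 'a graph" where
  "suppress v N =
     (let A = snd N; u = (THE u. (u, v) \<in> A); w = (THE w. (v, w) \<in> A)
      in (fst N - {v}, (A - {(u, v), (v, w)}) \<union> {(u, w)}))"

definition suppress_if :: "'a \<Rightarrow> 'a graph \<Rightarrow> 'a graph" where
  "suppress_if v N =
     (if v \<in> fst N \<and> indeg (snd N) v = 1 \<and> outdeg (snd N) v = 1 then suppress v N else N)"

definition is_cherry :: "'a graph \<Rightarrow> 'a \<Rightarrow> 'a \<Rightarrow> bool" where
  "is_cherry N x y \<longleftrightarrow> x \<noteq> y \<and> is_leaf N x \<and> is_leaf N y \<and>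
     (\<exists>p. (p, x) \<in> snd N \<and> (p, y) \<in> snd N)"

definition is_ret_cherry :: "'a graph \<Rightarrow> 'a \<Rightarrow> 'a \<Rightarrow> bool" where
  "is_ret_cherry N x y \<longleftrightarrow> x \<noteq> y \<and> is_leaf N x \<and> is_leaf N y \<and>
     is_reticulation N (par N x) \<and>
     (\<exists>p. (p, par N x) \<in> snd N \<and> (p, y) \<in> snd N)"

definition reduce_pair :: "'a graph \<Rightarrow> 'a \<times> 'a \<Rightarrow> 'a graph" where
  "reduce_pair N xy =
     (let x = fst xy; y = snd xy; px = par N x; py = par N y in
      if is_cherry N x y then
        suppress_if px (fst N - {x}, snd N - {(px, x)})
      else if is_ret_cherry N x y then
        suppress_if px (suppress_if py (fst N, snd N - {(py, px)}))
      else N)"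

definition reduce_seq :: "'a graph \<Rightarrow> ('a \<times> 'a) list \<Rightarrow> 'a graph" where
  "reduce_seq N S = foldl reduce_pair N S"

definition orchard :: "'a graph \<Rightarrow> bool" where
  "orchard N \<longleftrightarrow> (\<exists>S. is_tree (reduce_seq N S) \<and> card (leaves (reduce_seq N S)) = 1)"

definition internal :: "'a graph \<Rightarrow> 'a \<Rightarrow> bool" where
  "internal N v \<longleftrightarrow> v \<in> fst N \<and> \<not> is_leaf N v"

definition hgt_consistent :: "'a graph \<Rightarrow> ('a \<Rightarrow> real) \<Rightarrow> bool" where
  "hgt_consistent N t \<longleftrightarrow>
     (\<forall>(u, v) \<in> snd N. t u \<le> t v \<and> (t u = t v \<longrightarrow> is_reticulation N v)) \<and>
     (\<forall>u. internal N u \<longrightarrow> (\<exists>v. (u, v) \<in> snd N \<and> t u < t v)) \<and>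
     (\<forall>r u v. is_reticulation N r \<and> u \<noteq> v \<and> (u, r) \<in> snd N \<and> (v, r) \<in> snd N \<longrightarrow>
        ((t u = t r) \<noteq> (t v = t r)))"

end

theory Submission
  imports Defs
begin

lemma mem_parents[simp]: "u \<in> parents A v \<longleftrightarrow> (u, v) \<in> A"
  by (simp add: parents_def)

lemma mem_children[simp]: "w \<in> children A v \<longleftrightarrow> (v, w) \<in> A"
  by (simp add: children_def)

lemma card1_eq: "card S = 1 \<Longrightarrow> a \<in> S \<Longrightarrow> S = {a}"
  by (metis card_1_singletonE singletonD)

lemma card2_eq: "card S = 2 \<Longrightarrow> a \<in> S \<Longrightarrow> b \<in> S \<Longrightarrow> a \<noteq> b \<Longrightarrow> S = {a,b}"
  unfolding card_2_iff by auto

lemma set_iff: "S = T \<Longrightarrow> (x \<in> S \<longleftrightarrow> x \<in> T)" by simp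

lemma bin_net:
  assumes "is_binary (V, A)"
  shows "finite V" "A \<subseteq> V \<times> V" "acyclic A"
  using assms by (auto simp: is_binary_def is_network_def)

lemma bin_fin_par:
  assumes "is_binary (V, A)" shows "finite (parents A v)"
proof -
  have "parents A v \<subseteq> V" using bin_net(2)[OF assms] by auto
  thus ?thesis using bin_net(1)[OF assms] finite_subset by blast
qed

lemma bin_fin_ch:
  assumes "is_binary (V, A)" shows "finite (children A v)"
proof -
  have "children A v \<subseteq> V" using bin_net(2)[OF assms] by auto
  thus ?thesis using bin_net(1)[OF assms] finite_subset by blast
qed

lemma bin_indeg_pos:
  assumes "is_binary (V, A)" "(u, v) \<in> A" shows "indeg A v \<ge> 1"
proof -
  have "parents A v \<noteq> {}" using assms(2) by auto
  thus ?thesis using bin_fin_par[OF assms(1)] unfolding indeg_def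
    by (simp add: Suc_le_eq card_gt_0_iff)
qed

lemma bin_outdeg_pos:
  assumes "is_binary (V, A)" "(u, v) \<in> A" shows "outdeg A u \<ge> 1"
proof -
  have "children A u \<noteq> {}" using assms(2) by auto
  thus ?thesis using bin_fin_ch[OF assms(1)] unfolding outdeg_def
    by (simp add: Suc_le_eq card_gt_0_iff)
qed

lemma bin_noloop:
  assumes "is_binary (V, A)" shows "(v, v) \<notin> A"
  using bin_net(3)[OF assms] unfolding acyclic_def by blast

lemma bin_types:
  assumes "is_binary (V, A)" "v \<in> V"
  shows "(indeg A v = 0 \<and> outdeg A v = 1) \<or> (indeg A v = 1 \<and> outdeg A v = 2)
       \<or> (indeg A v = 2 \<and> outdeg A v = 1) \<or> (indeg A v = 1 \<and> outdeg A v = 0)"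
proof -
  have n: "is_network (V, A)" and b: "\<forall>v. (is_tree_node (V,A) v \<or> is_reticulation (V,A) v) \<longrightarrow>
           indeg A v + outdeg A v = 3"
    using assms(1) by (auto simp: is_binary_def)
  have "is_root (V,A) v \<or> is_tree_node (V,A) v \<or> is_reticulation (V,A) v \<or> is_leaf (V,A) v"
    using n assms(2) by (auto simp: is_network_def)
  thus ?thesis using b[rule_format, of v]
    by (auto simp: is_root_def is_tree_node_def is_reticulation_def is_leaf_def)
qed

lemma surgery:
  assumes bin: "is_binary (V,A)" and hgt: "hgt_consistent (V,A) t"
  and sub1: "V' \<subseteq> V" and sub2: "A' \<subseteq> V' \<times> V'" and sub3: "A' \<subseteq> A\<^sup>+"
  and deg: "\<And>v. v \<in> V' \<Longrightarrow> indeg A' v = indeg A v \<and> outdeg A' v = outdeg A v"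
  and root: "\<exists>r\<in>V'. is_root (V,A) r"
  and new: "\<And>u w. (u,w) \<in> A' \<Longrightarrow> (u,w) \<notin> A \<Longrightarrow> t u < t w \<and> \<not> is_reticulation (V,A) w"
  and lost: "\<And>u w. u \<in> V' \<Longrightarrow> (u,w) \<in> A \<Longrightarrow> (u,w) \<notin> A' \<Longrightarrow> \<exists>w'. (u,w') \<in> A' \<and> t w \<le> t w'"
  shows "is_binary (V',A') \<and> hgt_consistent (V',A') t"
proof -
  have eroot: "\<And>v. is_root (V',A') v \<longleftrightarrow> v \<in> V' \<and> is_root (V,A) v"
    using deg sub1 by (auto simp: is_root_def)
  have etree: "\<And>v. is_tree_node (V',A') v \<longleftrightarrow> v \<in> V' \<and> is_tree_node (V,A) v"
    using deg sub1 by (auto simp: is_tree_node_def)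
  have eret: "\<And>v. is_reticulation (V',A') v \<longleftrightarrow> v \<in> V' \<and> is_reticulation (V,A) v"
    using deg sub1 by (auto simp: is_reticulation_def)
  have eleaf: "\<And>v. is_leaf (V',A') v \<longleftrightarrow> v \<in> V' \<and> is_leaf (V,A) v"
    using deg sub1 by (auto simp: is_leaf_def)
  have n: "is_network (V, A)" and b: "\<forall>v. (is_tree_node (V,A) v \<or> is_reticulation (V,A) v) \<longrightarrow>
           indeg A v + outdeg A v = 3"
    using bin by (auto simp: is_binary_def)
  have fin: "finite V'" using bin_net(1)[OF bin] sub1 finite_subset by blast
  have acyc: "acyclic A'"
  proof -
    have "A'\<^sup>+ \<subseteq> A\<^sup>+"
    proof
      fix p assume "p \<in> A'\<^sup>+"
      hence "p \<in> (A\<^sup>+)\<^sup>+" using trancl_mono sub3 by blast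
      thus "p \<in> A\<^sup>+" by simp
    qed
    thus ?thesis using bin_net(3)[OF bin] unfolding acyclic_def by blast
  qed
  obtain r where r: "r \<in> V'" "is_root (V,A) r" using root by blast
  have uroot: "\<exists>!r. is_root (V',A') r"
  proof
    show "is_root (V',A') r" using r eroot by blast
    fix r' assume "is_root (V',A') r'"
    hence "is_root (V,A) r'" using eroot by blast
    thus "r' = r" using n r(2) unfolding is_network_def by blast
  qed
  have types: "\<forall>v\<in>V'. is_root (V',A') v \<or> is_tree_node (V',A') v \<or> is_reticulation (V',A') v \<or> is_leaf (V',A') v"
    using n sub1 unfolding is_network_def eroot etree eret eleaf by auto
  have net: "is_network (V',A')"
    unfolding is_network_def using fin sub2 acyc uroot types by simp
  have binary: "is_binary (V',A')"
    unfolding is_binary_def using net b deg etree eret by auto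
  have h1: "\<forall>(u, v) \<in> A. t u \<le> t v \<and> (t u = t v \<longrightarrow> is_reticulation (V,A) v)"
   and h2: "\<forall>u. internal (V,A) u \<longrightarrow> (\<exists>v. (u, v) \<in> A \<and> t u < t v)"
   and h3: "\<forall>r u v. is_reticulation (V,A) r \<and> u \<noteq> v \<and> (u, r) \<in> A \<and> (v, r) \<in> A \<longrightarrow>
        ((t u = t r) \<noteq> (t v = t r))"
    using hgt unfolding hgt_consistent_def by auto
  have g1: "\<forall>(u, v) \<in> A'. t u \<le> t v \<and> (t u = t v \<longrightarrow> is_reticulation (V',A') v)"
  proof (clarify)
    fix u v assume uv: "(u,v) \<in> A'"
    show "t u \<le> t v \<and> (t u = t v \<longrightarrow> is_reticulation (V',A') v)"
    proof (cases "(u,v) \<in> A")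
      case True
      thus ?thesis using h1 uv sub2 eret by fastforce
    next
      case False
      thus ?thesis using new[OF uv] by auto
    qed
  qed
  have g2: "\<forall>u. internal (V',A') u \<longrightarrow> (\<exists>v. (u, v) \<in> A' \<and> t u < t v)"
  proof (intro allI impI)
    fix u assume "internal (V',A') u"
    hence u: "u \<in> V'" "internal (V,A) u" using eleaf sub1 by (auto simp: internal_def)
    then obtain v where v: "(u,v) \<in> A" "t u < t v" using h2 by blast
    show "\<exists>v. (u, v) \<in> A' \<and> t u < t v"
    proof (cases "(u,v) \<in> A'")
      case True thus ?thesis using v by blast
    next
      case False
      then obtain w' where "(u,w') \<in> A'" "t v \<le> t w'" using lost[OF u(1) v(1)] by blast
      thus ?thesis using v(2) by force
    qed
  qed
  have g3: "\<forall>r u v. is_reticulation (V',A') r \<and> u \<noteq> v \<and> (u, r) \<in> A' \<and> (v, r) \<in> A' \<longrightarrow>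
        ((t u = t r) \<noteq> (t v = t r))"
  proof (intro allI impI)
    fix r u v assume a: "is_reticulation (V',A') r \<and> u \<noteq> v \<and> (u, r) \<in> A' \<and> (v, r) \<in> A'"
    hence rr: "is_reticulation (V,A) r" using eret by blast
    have "(u,r) \<in> A" using a rr new by blast
    moreover have "(v,r) \<in> A" using a rr new by blast
    ultimately show "(t u = t r) \<noteq> (t v = t r)" using h3 rr a by blast
  qed
  show ?thesis using binary g1 g2 g3 unfolding hgt_consistent_def snd_conv by blast
qed

lemma hgt_parts:
  assumes "hgt_consistent (V,A) t"
  shows "\<And>u v. (u, v) \<in> A \<Longrightarrow> t u \<le> t v"
   "\<And>u v. (u, v) \<in> A \<Longrightarrow> t u = t v \<Longrightarrow> is_reticulation (V,A) v"
   "\<And>u. internal (V,A) u \<Longrightarrow> (\<exists>v. (u, v) \<in> A \<and> t u < t v)"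
   "\<And>r u v. is_reticulation (V,A) r \<Longrightarrow> u \<noteq> v \<Longrightarrow> (u, r) \<in> A \<Longrightarrow> (v, r) \<in> A \<Longrightarrow>
        ((t u = t r) \<noteq> (t v = t r))"
  using assms unfolding hgt_consistent_def by auto

lemma bin_in_V:
  assumes "is_binary (V,A)" "(u,v) \<in> A" shows "u \<in> V" "v \<in> V"
  using bin_net(2)[OF assms(1)] assms(2) by auto

lemma leaf_not_par:
  assumes "is_binary (V,A)" "is_leaf (V,A) x" shows "(x,w) \<notin> A"
  using bin_outdeg_pos[OF assms(1)] assms(2) by (force simp: is_leaf_def)

lemma leaf_not_ret:
  assumes "is_leaf (V,A) x" shows "\<not> is_reticulation (V,A) x"
  using assms by (simp add: is_leaf_def is_reticulation_def)

lemma par_eq: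
  assumes "parents A x = {p}" shows "par (V,A) x = p"
proof -
  have "\<And>u. (u,x) \<in> A \<longleftrightarrow> u = p"
    using set_iff[OF assms] by simp
  thus ?thesis unfolding par_def by simp
qed

lemma ret_exists:
  assumes bin: "is_binary (V,A)" and hgt: "hgt_consistent (V,A) t"
  and ret: "is_reticulation (V,A) r"
  and M: "\<And>u w. (u,w) \<in> A \<Longrightarrow> t w > t r \<Longrightarrow> is_leaf (V,A) w"
  shows "\<exists>x y. is_ret_cherry (V,A) x y"
proof -
  note H = hgt_parts[OF hgt]
  have rV: "r \<in> V" and od: "outdeg A r = 1" and idg: "indeg A r \<ge> 2"
    using ret by (auto simp: is_reticulation_def)
  have id2: "indeg A r = 2" using bin_types[OF bin rV] od idg by auto
  have "internal (V,A) r" using rV od by (auto simp: internal_def is_leaf_def)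
  then obtain x where x: "(r,x) \<in> A" "t r < t x" using H(3) by blast
  have xl: "is_leaf (V,A) x" using M x by blast
  obtain a b where ab: "parents A r = {a,b}" "a \<noteq> b"
    using id2 unfolding indeg_def card_2_iff by blast
  obtain z where z: "(z,r) \<in> A" "t z = t r"
  proof -
    have "(a,r) \<in> A" "(b,r) \<in> A" using ab by auto
    with H(4)[OF ret ab(2)] that show ?thesis by blast
  qed
  have zV: "z \<in> V" using bin_in_V[OF bin z(1)] by simp
  have zr: "z \<noteq> r" using z(1) bin_noloop[OF bin] by auto
  have zint: "internal (V,A) z"
    using zV bin_outdeg_pos[OF bin z(1)] by (auto simp: internal_def is_leaf_def)
  have ch2: "outdeg A z = 2"
  proof (rule ccontr)
    assume "outdeg A z \<noteq> 2"
    hence "outdeg A z = 1" using bin_types[OF bin zV] bin_outdeg_pos[OF bin z(1)] by auto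
    hence "children A z = {r}" using z(1) card1_eq[of "children A z" r] unfolding outdeg_def by simp
    moreover obtain w where "(z,w) \<in> A" "t z < t w" using H(3)[OF zint] by blast
    ultimately show False using z(2) by auto
  qed
  obtain y where y: "(z,y) \<in> A" "t z < t y" using H(3)[OF zint] by blast
  have yl: "is_leaf (V,A) y" using M y z(2) by auto
  have xpar: "parents A x = {r}"
    using xl x(1) card1_eq[of "parents A x" r] unfolding is_leaf_def indeg_def by simp
  have xy: "x \<noteq> y"
  proof
    assume "x = y"
    hence "z \<in> parents A x" using y by simp
    thus False using xpar zr by simp
  qed
  have parx: "par (V,A) x = r"
    using xpar by (rule par_eq)
  have "is_ret_cherry (V,A) x y"
    unfolding is_ret_cherry_def parx using xy xl yl ret z(1) y(1) by auto
  thus ?thesis by blast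
qed

lemma root_no_par:
  assumes "is_binary (V,A)" "is_root (V,A) r" shows "(u,r) \<notin> A"
  using bin_indeg_pos[OF assms(1)] assms(2) by (force simp: is_root_def)

lemma pair_exists:
  assumes bin: "is_binary (V,A)" and hgt: "hgt_consistent (V,A) t"
  and ne: "\<exists>u\<in>V. internal (V,A) u \<and> \<not> is_root (V,A) u"
  shows "\<exists>x y. is_cherry (V,A) x y \<or> is_ret_cherry (V,A) x y"
proof -
  note H = hgt_parts[OF hgt]
  define I where "I = {u\<in>V. internal (V,A) u \<and> \<not> is_root (V,A) u}"
  have finI: "finite I" using bin_net(1)[OF bin] unfolding I_def by simp
  have neI: "I \<noteq> {}" using ne unfolding I_def by blast
  obtain v where vI: "v \<in> I" and vm: "t v = Max (t ` I)"
  proof -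
    have "Max (t ` I) \<in> t ` I" using Max_in[of "t ` I"] finI neI by simp
    then obtain w where "w \<in> I" "Max (t ` I) = t w" by blast
    thus ?thesis using that by simp
  qed
  have maxI: "\<And>w. w \<in> I \<Longrightarrow> t w \<le> t v" using vm finI by simp
  have M: "\<And>u w. (u,w) \<in> A \<Longrightarrow> t w > t v \<Longrightarrow> is_leaf (V,A) w"
  proof -
    fix u w assume uw: "(u,w) \<in> A" "t w > t v"
    show "is_leaf (V,A) w"
    proof (rule ccontr)
      assume nl: "\<not> is_leaf (V,A) w"
      have "w \<in> V" using bin_in_V[OF bin uw(1)] by simp
      moreover have "\<not> is_root (V,A) w" using root_no_par[OF bin] uw(1) by blast
      ultimately have "w \<in> I" using nl by (simp add: I_def internal_def)
      thus False using maxI uw(2) by force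
    qed
  qed
  have vV: "v \<in> V" and vnl: "\<not> is_leaf (V,A) v" and vnr: "\<not> is_root (V,A) v"
    using vI unfolding I_def internal_def by auto
  have "is_reticulation (V,A) v \<or> (indeg A v = 1 \<and> outdeg A v = 2)"
    using bin_types[OF bin vV] vV vnl vnr
    by (auto simp: is_reticulation_def is_leaf_def is_root_def)
  thus ?thesis
  proof
    assume rv: "is_reticulation (V,A) v"
    have "\<exists>x y. is_ret_cherry (V,A) x y"
      by (rule ret_exists[OF bin hgt rv]) (rule M)
    thus ?thesis by blast
  next
    assume od: "indeg A v = 1 \<and> outdeg A v = 2"
    have "internal (V,A) v" using vV vnl by (simp add: internal_def)
    then obtain y where y: "(v,y) \<in> A" "t v < t y" using H(3) by blast
    have yl: "is_leaf (V,A) y" using M y by blast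
    obtain a b where ab: "children A v = {a,b}" "a \<noteq> b"
      using od unfolding outdeg_def card_2_iff by blast
    define c where "c = (if a = y then b else a)"
    have c: "(v,c) \<in> A" "c \<noteq> y" unfolding c_def using ab set_iff[OF ab(1)] by auto
    show ?thesis
    proof (cases "is_leaf (V,A) c")
      case True
      have "is_cherry (V,A) c y" unfolding is_cherry_def using True yl c y by auto
      thus ?thesis by blast
    next
      case False
      have "c \<in> V" using bin_in_V[OF bin c(1)] by simp
      moreover have "\<not> is_root (V,A) c" using root_no_par[OF bin] c(1) by blast
      ultimately have "c \<in> I" using False by (simp add: I_def internal_def)
      hence "t c \<le> t v" using maxI by blast
      hence tc: "t c = t v" using H(1)[OF c(1)] by simp
      hence rc: "is_reticulation (V,A) c" using H(2)[OF c(1)] by simp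
      have M': "\<And>u w. (u,w) \<in> A \<Longrightarrow> t w > t c \<Longrightarrow> is_leaf (V,A) w" using M tc by simp
      have "\<exists>x y. is_ret_cherry (V,A) x y"
        by (rule ret_exists[OF bin hgt rc]) (rule M')
      thus ?thesis by blast
    qed
  qed
qed

lemma base_case:
  assumes bin: "is_binary (V,A)"
  and all: "\<forall>u\<in>V. internal (V,A) u \<longrightarrow> is_root (V,A) u"
  shows "orchard (V,A)"
proof -
  have net: "is_network (V,A)" using bin by (simp add: is_binary_def)
  then obtain r where r: "is_root (V,A) r" and ru: "\<And>r'. is_root (V,A) r' \<Longrightarrow> r' = r"
    unfolding is_network_def by blast
  have "outdeg A r = 1" using r by (simp add: is_root_def)
  then obtain x where cx: "children A r = {x}" unfolding outdeg_def by (rule card_1_singletonE)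
  have rx: "(r,x) \<in> A" using set_iff[OF cx, of x] by simp
  have xV: "x \<in> V" using bin_in_V[OF bin rx] by simp
  have xnr: "\<not> is_root (V,A) x" using root_no_par[OF bin] rx by blast
  have xl: "is_leaf (V,A) x" using all xV xnr unfolding internal_def by auto
  have noret: "\<forall>v. \<not> is_reticulation (V,A) v"
  proof (intro allI notI)
    fix v assume rv: "is_reticulation (V,A) v"
    hence "internal (V,A) v" by (auto simp: internal_def is_reticulation_def is_leaf_def)
    hence "is_root (V,A) v" using all rv by (auto simp: is_reticulation_def)
    thus False using rv by (auto simp: is_reticulation_def is_root_def)
  qed
  have lv: "leaves (V,A) = {x}"
  proof (intro set_eqI iffI)
    fix z assume "z \<in> leaves (V,A)"
    hence zl: "is_leaf (V,A) z" by (simp add: leaves_def)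
    hence "card (parents A z) = 1" by (simp add: is_leaf_def indeg_def)
    then obtain w where "parents A z = {w}" by (rule card_1_singletonE)
    hence "w \<in> parents A z" by simp
    hence wz: "(w,z) \<in> A" by simp
    have wV: "w \<in> V" using bin_in_V[OF bin wz] by simp
    have "\<not> is_leaf (V,A) w" using leaf_not_par[OF bin] wz by blast
    hence "is_root (V,A) w" using all wV by (auto simp: internal_def)
    hence "w = r" using ru by blast
    hence "z \<in> children A r" using wz by simp
    thus "z \<in> {x}" using cx by simp
  next
    fix z assume "z \<in> {x}" thus "z \<in> leaves (V,A)" using xl by (simp add: leaves_def)
  qed
  have "is_tree (reduce_seq (V,A) []) \<and> card (leaves (reduce_seq (V,A) [])) = 1"
    unfolding reduce_seq_def using net noret lv by (simp add: is_tree_def)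
  thus ?thesis unfolding orchard_def by blast
qed

lemma card_swap:
  assumes "finite S" "a \<in> S" "b \<notin> S" shows "card (insert b (S - {a})) = card S"
proof -
  have "card (insert b (S - {a})) = Suc (card (S - {a}))" using assms by simp
  also have "\<dots> = card S" using card.remove[OF assms(1,2)] by simp
  finally show ?thesis .
qed

lemma leaf_par1:
  assumes "is_leaf (V,A) x" "(p,x) \<in> A" shows "parents A x = {p}"
  using assms card1_eq[of "parents A x" p] by (simp add: is_leaf_def indeg_def)

lemma cherry_red:
  assumes bin: "is_binary (V,A)" and hgt: "hgt_consistent (V,A) t"
  and ch: "is_cherry (V,A) x y"
  shows "\<exists>V' A'. reduce_pair (V,A) (x,y) = (V',A') \<and> is_binary (V',A') \<and>
           hgt_consistent (V',A') t \<and> card V' < card V"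
proof -
  note H = hgt_parts[OF hgt]
  obtain p where px: "(p,x) \<in> A" and py: "(p,y) \<in> A" and xy: "x \<noteq> y"
    and xl: "is_leaf (V,A) x" and yl: "is_leaf (V,A) y"
    using ch unfolding is_cherry_def by auto
  have Ix: "\<And>u. (u,x) \<in> A \<longleftrightarrow> u = p" using set_iff[OF leaf_par1[OF xl px]] by simp
  have Iy: "\<And>u. (u,y) \<in> A \<longleftrightarrow> u = p" using set_iff[OF leaf_par1[OF yl py]] by simp
  have Cx: "\<And>w. (x,w) \<notin> A" using leaf_not_par[OF bin xl] .
  have Cy: "\<And>w. (y,w) \<notin> A" using leaf_not_par[OF bin yl] .
  have pV: "p \<in> V" using bin_in_V[OF bin px] by simp
  have "{x,y} \<subseteq> children A p" using px py by auto
  hence "card {x,y} \<le> outdeg A p" unfolding outdeg_def using bin_fin_ch[OF bin] card_mono by blast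
  hence "outdeg A p \<ge> 2" using xy by simp
  hence pdeg: "indeg A p = 1" "outdeg A p = 2" using bin_types[OF bin pV] by auto
  have chp: "children A p = {x,y}" using card2_eq[of "children A p" x y] pdeg px py xy
    by (simp add: outdeg_def)
  have Cp: "\<And>w. (p,w) \<in> A \<longleftrightarrow> w = x \<or> w = y" using set_iff[OF chp] by simp
  obtain g where pp: "parents A p = {g}" using pdeg(1) unfolding indeg_def by (rule card_1_singletonE)
  have Ip: "\<And>u. (u,p) \<in> A \<longleftrightarrow> u = g" using set_iff[OF pp] by simp
  have gp: "(g,p) \<in> A" using Ip by simp
  have gV: "g \<in> V" using bin_in_V[OF bin gp] by simp
  have nl: "\<And>v. (v,v) \<notin> A" using bin_noloop[OF bin] .
  have d: "g \<noteq> p" "p \<noteq> x" "p \<noteq> y" "g \<noteq> x" "g \<noteq> y"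
  proof -
    show "g \<noteq> p" using nl gp by blast
    show "p \<noteq> x" using nl px by blast
    show "p \<noteq> y" using nl py by blast
    show "g \<noteq> x" using Cx gp by blast
    show "g \<noteq> y" using Cy gp by blast
  qed
  have gy: "(g,y) \<notin> A" using Iy d by simp
  have parx: "par (V,A) x = p" using leaf_par1[OF xl px] by (rule par_eq)
  define A1 where "A1 = A - {(p,x)}"
  have e1: "reduce_pair (V,A) (x,y) = suppress_if p (V - {x}, A1)"
    unfolding reduce_pair_def Let_def A1_def fst_conv snd_conv if_P[OF ch] parx ..
  have pA1: "parents A1 p = {g}"
  proof (rule set_eqI)
    fix u show "u \<in> parents A1 p \<longleftrightarrow> u \<in> {g}"
      unfolding A1_def mem_parents using Ip[of u] d(2) by blast
  qed
  have cA1: "children A1 p = {y}"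
  proof (rule set_eqI)
    fix w show "w \<in> children A1 p \<longleftrightarrow> w \<in> {y}"
      unfolding A1_def mem_children using Cp[of w] xy by blast
  qed
  have e2: "suppress_if p (V - {x}, A1) = suppress p (V - {x}, A1)"
    unfolding suppress_if_def indeg_def outdeg_def using pA1 cA1 pV d by simp
  have t1: "(THE u. (u, p) \<in> A1) = g" using set_iff[OF pA1] by simp
  have t2: "(THE w. (p, w) \<in> A1) = y" using set_iff[OF cA1] by simp
  define V' where "V' = V - {x} - {p}"
  define A' where "A' = (A1 - {(g,p),(p,y)}) \<union> {(g,y)}"
  have e3: "suppress p (V - {x}, A1) = (V', A')"
    unfolding suppress_def Let_def fst_conv snd_conv t1 t2 V'_def A'_def by simp
  have memA': "\<And>a b. (a,b) \<in> A' \<longleftrightarrow> ((a,b) \<in> A \<and> (a,b) \<noteq> (p,x) \<and> (a,b) \<noteq> (g,p) \<and> (a,b) \<noteq> (p,y))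
      \<or> (a,b) = (g,y)"
    unfolding A'_def A1_def by auto
  have AV: "A \<subseteq> V \<times> V" using bin_net(2)[OF bin] .
  have xV: "x \<in> V" using bin_in_V[OF bin px] by simp
  have yV: "y \<in> V" using bin_in_V[OF bin py] by simp
  have sub2: "A' \<subseteq> V' \<times> V'"
  proof
    fix e assume "e \<in> A'"
    then obtain a b where e: "e = (a,b)" "(a,b) \<in> A'" by (cases e) auto
    show "e \<in> V' \<times> V'"
    proof (cases "(a,b) = (g,y)")
      case True thus ?thesis using e gV yV d xy unfolding V'_def by auto
    next
      case False
      hence ab: "(a,b) \<in> A" "(a,b) \<noteq> (p,x)" "(a,b) \<noteq> (g,p)" "(a,b) \<noteq> (p,y)"
        using e(2) memA' by auto
      have "a \<in> V" "b \<in> V" using AV ab(1) by auto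
      moreover have "a \<noteq> x" using Cx ab(1) by auto
      moreover have "a \<noteq> p" using Cp ab by auto
      moreover have "b \<noteq> x" using Ix ab by auto
      moreover have "b \<noteq> p" using Ip ab by auto
      ultimately show ?thesis using e unfolding V'_def by auto
    qed
  qed
  have sub3: "A' \<subseteq> A\<^sup>+"
  proof
    fix e assume "e \<in> A'"
    then obtain a b where e: "e = (a,b)" "(a,b) \<in> A'" by (cases e) auto
    show "e \<in> A\<^sup>+"
    proof (cases "(a,b) = (g,y)")
      case True thus ?thesis using e trancl_into_trancl[OF r_into_trancl[OF gp] py] by simp
    next
      case False
      hence "(a,b) \<in> A" using e(2) memA' by blast
      thus ?thesis using e(1) by (simp add: r_into_trancl)
    qed
  qed
  have finch: "\<And>v. finite (children A v)" using bin_fin_ch[OF bin] .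
  have deg: "\<And>v. v \<in> V' \<Longrightarrow> indeg A' v = indeg A v \<and> outdeg A' v = outdeg A v"
  proof
    fix v assume v: "v \<in> V'"
    hence vx: "v \<noteq> x" "v \<noteq> p" unfolding V'_def by auto
    show "indeg A' v = indeg A v"
    proof (cases "v = y")
      case True
      have "parents A' v = {g}"
      proof (rule set_eqI)
        fix u show "u \<in> parents A' v \<longleftrightarrow> u \<in> {g}"
          using True memA'[of u y] Iy[of u] d by auto
      qed
      moreover have "parents A v = {p}" using leaf_par1[OF yl py] True by simp
      ultimately show ?thesis unfolding indeg_def by simp
    next
      case False
      have "parents A' v = parents A v"
      proof (rule set_eqI)
        fix u show "u \<in> parents A' v \<longleftrightarrow> u \<in> parents A v"
          using False vx memA'[of u v] by auto
      qed
      thus ?thesis unfolding indeg_def by simp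
    qed
    show "outdeg A' v = outdeg A v"
    proof (cases "v = g")
      case True
      have "children A' v = insert y (children A g - {p})"
      proof (rule set_eqI)
        fix w show "w \<in> children A' v \<longleftrightarrow> w \<in> insert y (children A g - {p})"
          using True memA'[of g w] d by auto
      qed
      moreover have "card (insert y (children A g - {p})) = card (children A g)"
        by (rule card_swap) (use finch gp gy in auto)
      ultimately show ?thesis unfolding outdeg_def using True by simp
    next
      case False
      have "children A' v = children A v"
      proof (rule set_eqI)
        fix w show "w \<in> children A' v \<longleftrightarrow> w \<in> children A v"
          using False vx memA'[of v w] by auto
      qed
      thus ?thesis unfolding outdeg_def by simp
    qed
  qed
  have root: "\<exists>r\<in>V'. is_root (V,A) r"
  proof -
    obtain r where r: "is_root (V,A) r" using bin unfolding is_binary_def is_network_def by blast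
    have "r \<noteq> x" "r \<noteq> p" using root_no_par[OF bin r] px gp by blast+
    moreover have "r \<in> V" using r by (simp add: is_root_def)
    ultimately show ?thesis using r unfolding V'_def by blast
  qed
  have tpy: "t p < t y"
    using H(1)[OF py] H(2)[OF py] leaf_not_ret[OF yl] by force
  have new: "\<And>u w. (u,w) \<in> A' \<Longrightarrow> (u,w) \<notin> A \<Longrightarrow> t u < t w \<and> \<not> is_reticulation (V,A) w"
  proof -
    fix u w assume "(u,w) \<in> A'" "(u,w) \<notin> A"
    hence "u = g" "w = y" using memA'[of u w] by auto
    thus "t u < t w \<and> \<not> is_reticulation (V,A) w"
      using H(1)[OF gp] tpy leaf_not_ret[OF yl] by simp
  qed
  have lost: "\<And>u w. u \<in> V' \<Longrightarrow> (u,w) \<in> A \<Longrightarrow> (u,w) \<notin> A' \<Longrightarrow> \<exists>w'. (u,w') \<in> A' \<and> t w \<le> t w'"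
  proof -
    fix u w assume "u \<in> V'" "(u,w) \<in> A" "(u,w) \<notin> A'"
    hence "u \<noteq> p" "(u,w) \<in> A" "(u,w) \<notin> A'" unfolding V'_def by auto
    hence "u = g" "w = p" using memA'[of u w] by auto
    moreover have "(g,y) \<in> A'" using memA' by simp
    ultimately show "\<exists>w'. (u,w') \<in> A' \<and> t w \<le> t w'" using tpy by force
  qed
  have res: "is_binary (V',A') \<and> hgt_consistent (V',A') t"
    by (rule surgery[OF bin hgt _ sub2 sub3 deg root new lost]) (auto simp: V'_def)
  have "V' \<subset> V" using xV unfolding V'_def by auto
  hence "card V' < card V" using bin_net(1)[OF bin] psubset_card_mono by blast
  thus ?thesis using res e1 e2 e3 by auto
qed

lemma ret_red:
  assumes bin: "is_binary (V,A)" and hgt: "hgt_consistent (V,A) t"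
  and rc: "is_ret_cherry (V,A) x y"
  shows "\<exists>V' A'. reduce_pair (V,A) (x,y) = (V',A') \<and> is_binary (V',A') \<and>
           hgt_consistent (V',A') t \<and> card V' < card V"
proof -
  note H = hgt_parts[OF hgt]
  have xy: "x \<noteq> y" and xl: "is_leaf (V,A) x" and yl: "is_leaf (V,A) y"
    using rc unfolding is_ret_cherry_def by auto
  have "card (parents A x) = 1" using xl by (simp add: is_leaf_def indeg_def)
  then obtain r where prx: "parents A x = {r}" by (rule card_1_singletonE)
  have parx: "par (V,A) x = r" using prx by (rule par_eq)
  have rx: "(r,x) \<in> A" using set_iff[OF prx, of r] by simp
  have rret: "is_reticulation (V,A) r" using rc parx unfolding is_ret_cherry_def by simp
  obtain s where sr: "(s,r) \<in> A" and sy: "(s,y) \<in> A"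
    using rc parx unfolding is_ret_cherry_def by auto
  have Ix: "\<And>u. (u,x) \<in> A \<longleftrightarrow> u = r" using set_iff[OF prx] by simp
  have pry: "parents A y = {s}" using leaf_par1[OF yl sy] .
  have Iy: "\<And>u. (u,y) \<in> A \<longleftrightarrow> u = s" using set_iff[OF pry] by simp
  have pary: "par (V,A) y = s" using pry by (rule par_eq)
  have Cx: "\<And>w. (x,w) \<notin> A" using leaf_not_par[OF bin xl] .
  have Cy: "\<And>w. (y,w) \<notin> A" using leaf_not_par[OF bin yl] .
  have nl: "\<And>v. (v,v) \<notin> A" using bin_noloop[OF bin] .
  have rV: "r \<in> V" using bin_in_V[OF bin rx] by simp
  have rdeg: "outdeg A r = 1" "indeg A r = 2"
    using rret bin_types[OF bin rV] by (auto simp: is_reticulation_def)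
  have chr: "children A r = {x}" using card1_eq[of "children A r" x] rdeg rx
    by (simp add: outdeg_def)
  have Cr: "\<And>w. (r,w) \<in> A \<longleftrightarrow> w = x" using set_iff[OF chr] by simp
  obtain a b where ab: "parents A r = {a,b}" "a \<noteq> b"
    using rdeg(2) unfolding indeg_def card_2_iff by blast
  define q where "q = (if a = s then b else a)"
  have sab: "s = a \<or> s = b" using set_iff[OF ab(1), of s] sr by simp
  have prr: "parents A r = {s,q}" "q \<noteq> s"
  proof -
    show "parents A r = {s,q}"
    proof (cases "a = s")
      case True thus ?thesis using ab(1) unfolding q_def by simp
    next
      case False thus ?thesis using ab(1) sab unfolding q_def by (simp add: insert_commute)
    qed
    show "q \<noteq> s" using ab(2) sab unfolding q_def by auto
  qed
  have Ir: "\<And>u. (u,r) \<in> A \<longleftrightarrow> u = s \<or> u = q" using set_iff[OF prr(1)] by simp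
  have qr: "(q,r) \<in> A" using Ir by simp
  have ry: "r \<noteq> y" using rret leaf_not_ret[OF yl] by blast
  have sV: "s \<in> V" using bin_in_V[OF bin sr] by simp
  have "{r,y} \<subseteq> children A s" using sr sy by auto
  hence "card {r,y} \<le> outdeg A s" unfolding outdeg_def using bin_fin_ch[OF bin] card_mono by blast
  hence "outdeg A s \<ge> 2" using ry by simp
  hence sdeg: "indeg A s = 1" "outdeg A s = 2" using bin_types[OF bin sV] by auto
  have chs: "children A s = {r,y}" using card2_eq[of "children A s" r y] sdeg sr sy ry
    by (simp add: outdeg_def)
  have Cs: "\<And>w. (s,w) \<in> A \<longleftrightarrow> w = r \<or> w = y" using set_iff[OF chs] by simp
  obtain g where ps: "parents A s = {g}" using sdeg(1) unfolding indeg_def by (rule card_1_singletonE)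
  have Is: "\<And>u. (u,s) \<in> A \<longleftrightarrow> u = g" using set_iff[OF ps] by simp
  have gs: "(g,s) \<in> A" using Is by simp
  have gV: "g \<in> V" using bin_in_V[OF bin gs] by simp
  have qV: "q \<in> V" using bin_in_V[OF bin qr] by simp
  have xV: "x \<in> V" using bin_in_V[OF bin rx] by simp
  have yV: "y \<in> V" using bin_in_V[OF bin sy] by simp
  have d1: "s \<noteq> r" "r \<noteq> x" "s \<noteq> y" "g \<noteq> s" "q \<noteq> r"
    using nl sr rx sy gs qr by metis+
  have d2: "s \<noteq> x" "q \<noteq> x" "g \<noteq> x" using Cx sr qr gs by metis+
  have d3: "q \<noteq> y" "g \<noteq> y" using Cy qr gs by metis+
  have d4: "g \<noteq> r"
  proof
    assume "g = r" hence "(r,s) \<in> A" using gs by simp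
    thus False using Cr d2(1) by simp
  qed
  have ncherry: "\<not> is_cherry (V,A) x y"
  proof
    assume "is_cherry (V,A) x y"
    then obtain p where "(p,x) \<in> A" "(p,y) \<in> A" unfolding is_cherry_def by auto
    hence "p = r" "(p,y) \<in> A" using Ix by auto
    thus False using Cr xy by auto
  qed
  define A1 where "A1 = A - {(s,r)}"
  have e1: "reduce_pair (V,A) (x,y) = suppress_if r (suppress_if s (V, A1))"
    unfolding reduce_pair_def Let_def A1_def fst_conv snd_conv if_not_P[OF ncherry] if_P[OF rc]
      parx pary ..
  have pA1: "parents A1 s = {g}"
  proof (rule set_eqI)
    fix u show "u \<in> parents A1 s \<longleftrightarrow> u \<in> {g}"
      unfolding A1_def mem_parents using Is[of u] d1(1) by blast
  qed
  have cA1: "children A1 s = {y}"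
  proof (rule set_eqI)
    fix w show "w \<in> children A1 s \<longleftrightarrow> w \<in> {y}"
      unfolding A1_def mem_children using Cs[of w] ry by blast
  qed
  have e2: "suppress_if s (V, A1) = suppress s (V, A1)"
    unfolding suppress_if_def indeg_def outdeg_def using pA1 cA1 sV by simp
  have t1: "(THE u. (u, s) \<in> A1) = g" using set_iff[OF pA1] by simp
  have t2: "(THE w. (s, w) \<in> A1) = y" using set_iff[OF cA1] by simp
  define A2 where "A2 = (A1 - {(g,s),(s,y)}) \<union> {(g,y)}"
  have e3: "suppress s (V, A1) = (V - {s}, A2)"
    unfolding suppress_def Let_def fst_conv snd_conv t1 t2 A2_def by simp
  have pA2: "parents A2 r = {q}"
  proof (rule set_eqI)
    fix u show "u \<in> parents A2 r \<longleftrightarrow> u \<in> {q}"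
      unfolding A2_def A1_def mem_parents using Ir[of u] d1 ry prr(2) by auto
  qed
  have cA2: "children A2 r = {x}"
  proof (rule set_eqI)
    fix w show "w \<in> children A2 r \<longleftrightarrow> w \<in> {x}"
      unfolding A2_def A1_def mem_children using Cr[of w] d1 d4 by auto
  qed
  have e4: "suppress_if r (V - {s}, A2) = suppress r (V - {s}, A2)"
    unfolding suppress_if_def indeg_def outdeg_def using pA2 cA2 rV d1 by simp
  have t3: "(THE u. (u, r) \<in> A2) = q" using set_iff[OF pA2] by simp
  have t4: "(THE w. (r, w) \<in> A2) = x" using set_iff[OF cA2] by simp
  define V' where "V' = V - {s} - {r}"
  define A' where "A' = (A2 - {(q,r),(r,x)}) \<union> {(q,x)}"
  have e5: "suppress r (V - {s}, A2) = (V', A')"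
    unfolding suppress_def Let_def fst_conv snd_conv t3 t4 V'_def A'_def by simp
  have memA': "\<And>a b. (a,b) \<in> A' \<longleftrightarrow> ((a,b) \<in> A \<and> (a,b) \<noteq> (s,r) \<and> (a,b) \<noteq> (g,s) \<and>
       (a,b) \<noteq> (s,y) \<and> (a,b) \<noteq> (q,r) \<and> (a,b) \<noteq> (r,x)) \<or> (a,b) = (g,y) \<or> (a,b) = (q,x)"
    unfolding A'_def A2_def A1_def using ry d4 by auto
  have AV: "A \<subseteq> V \<times> V" using bin_net(2)[OF bin] .
  have sub2: "A' \<subseteq> V' \<times> V'"
  proof
    fix e assume "e \<in> A'"
    then obtain a b where e: "e = (a,b)" "(a,b) \<in> A'" by (cases e) auto
    show "e \<in> V' \<times> V'"
    proof (cases "(a,b) = (g,y) \<or> (a,b) = (q,x)")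
      case True thus ?thesis using e gV yV qV xV d1 d2 d3 d4 prr(2) ry unfolding V'_def by auto
    next
      case False
      hence ab: "(a,b) \<in> A" "(a,b) \<noteq> (s,r)" "(a,b) \<noteq> (g,s)" "(a,b) \<noteq> (s,y)"
         "(a,b) \<noteq> (q,r)" "(a,b) \<noteq> (r,x)"
        using e(2) memA'[of a b] by auto
      have "a \<in> V" "b \<in> V" using AV ab(1) by auto
      moreover have "a \<noteq> s" using Cs[of b] ab by auto
      moreover have "a \<noteq> r" using Cr[of b] ab by auto
      moreover have "b \<noteq> s" using Is[of a] ab by auto
      moreover have "b \<noteq> r" using Ir[of a] ab by auto
      ultimately show ?thesis using e unfolding V'_def by auto
    qed
  qed
  have sub3: "A' \<subseteq> A\<^sup>+"
  proof
    fix e assume "e \<in> A'"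
    then obtain a b where e: "e = (a,b)" "(a,b) \<in> A'" by (cases e) auto
    show "e \<in> A\<^sup>+"
    proof (cases "(a,b) = (g,y)")
      case True thus ?thesis using e trancl_into_trancl[OF r_into_trancl[OF gs] sy] by simp
    next
      case F1: False
      show ?thesis
      proof (cases "(a,b) = (q,x)")
        case True thus ?thesis using e trancl_into_trancl[OF r_into_trancl[OF qr] rx] by simp
      next
        case False
        hence "(a,b) \<in> A" using F1 e(2) memA'[of a b] by blast
        thus ?thesis using e(1) by (simp add: r_into_trancl)
      qed
    qed
  qed
  have finch: "\<And>v. finite (children A v)" using bin_fin_ch[OF bin] .
  define f where "f = (\<lambda>w. if w = s then y else if w = r then x else w)"
  have deg: "\<And>v. v \<in> V' \<Longrightarrow> indeg A' v = indeg A v \<and> outdeg A' v = outdeg A v"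
  proof
    fix v assume v: "v \<in> V'"
    hence vs: "v \<noteq> s" "v \<noteq> r" unfolding V'_def by auto
    show "indeg A' v = indeg A v"
    proof (cases "v = y")
      case True
      have "parents A' v = {g}"
      proof (rule set_eqI)
        fix u show "u \<in> parents A' v \<longleftrightarrow> u \<in> {g}"
          using True memA'[of u y] Iy[of u] d1 d3 xy ry by auto
      qed
      moreover have "parents A v = {s}" using pry True by simp
      ultimately show ?thesis unfolding indeg_def by simp
    next
      case F1: False
      show ?thesis
      proof (cases "v = x")
        case True
        have "parents A' v = {q}"
        proof (rule set_eqI)
          fix u show "u \<in> parents A' v \<longleftrightarrow> u \<in> {q}"
            using True memA'[of u x] Ix[of u] d1 d2 xy by auto
        qed
        moreover have "parents A v = {r}" using prx True by simp
        ultimately show ?thesis unfolding indeg_def by simp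
      next
        case False
        have "parents A' v = parents A v"
        proof (rule set_eqI)
          fix u show "u \<in> parents A' v \<longleftrightarrow> u \<in> parents A v"
            using False F1 vs memA'[of u v] by auto
        qed
        thus ?thesis unfolding indeg_def by simp
      qed
    qed
    have img: "children A' v = f ` children A v"
    proof (rule set_eqI)
      fix w show "w \<in> children A' v \<longleftrightarrow> w \<in> f ` children A v"
      proof
        assume "w \<in> children A' v"
        hence vw: "(v,w) \<in> A'" by simp
        show "w \<in> f ` children A v"
        proof (cases "(v,w) = (g,y)")
          case True
          hence "w = f s" "(v,s) \<in> A" using gs unfolding f_def by auto
          thus ?thesis by force
        next
          case F1: False
          show ?thesis
          proof (cases "(v,w) = (q,x)")
            case True
            hence "w = f r" "(v,r) \<in> A" using qr d1 unfolding f_def by auto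
            thus ?thesis by force
          next
            case False
            hence ab: "(v,w) \<in> A" "(v,w) \<noteq> (g,s)" "(v,w) \<noteq> (q,r)"
              using F1 vw memA'[of v w] by auto
            have "w \<noteq> s" using Is[of v] ab by auto
            moreover have "w \<noteq> r" using Ir[of v] ab vs by auto
            ultimately have "w = f w" unfolding f_def by simp
            thus ?thesis using ab(1) by force
          qed
        qed
      next
        assume "w \<in> f ` children A v"
        then obtain w0 where w0: "(v,w0) \<in> A" "w = f w0" by auto
        show "w \<in> children A' v"
        proof (cases "w0 = s")
          case True
          hence "v = g" "w = y" using w0 Is[of v] unfolding f_def by auto
          thus ?thesis using memA'[of g y] by simp
        next
          case F1: False
          show ?thesis
          proof (cases "w0 = r")
            case True
            hence "v = q" "w = x" using w0 Ir[of v] vs F1 unfolding f_def by auto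
            thus ?thesis using memA'[of q x] by simp
          next
            case False
            hence "w = w0" using F1 w0 unfolding f_def by simp
            thus ?thesis using w0 F1 False vs memA'[of v w0] by auto
          qed
        qed
      qed
    qed
    have inj: "inj_on f (children A v)"
    proof (rule inj_onI)
      fix w1 w2 assume w: "w1 \<in> children A v" "w2 \<in> children A v" "f w1 = f w2"
      have A1: "(v,w1) \<in> A" "(v,w2) \<in> A" using w by auto
      have nvy: "(v,y) \<notin> A" using Iy[of v] vs by simp
      have nvx: "(v,x) \<notin> A" using Ix[of v] vs by simp
      show "w1 = w2"
        using w(3) A1 nvy nvx d1 d2 xy ry unfolding f_def by (auto split: if_splits)
    qed
    show "outdeg A' v = outdeg A v"
      unfolding outdeg_def img using card_image[OF inj] .
  qed
  have root: "\<exists>\<rho>\<in>V'. is_root (V,A) \<rho>"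
  proof -
    obtain \<rho> where \<rho>: "is_root (V,A) \<rho>" using bin unfolding is_binary_def is_network_def by blast
    have "\<rho> \<noteq> s" "\<rho> \<noteq> r" using root_no_par[OF bin \<rho>] gs sr by blast+
    moreover have "\<rho> \<in> V" using \<rho> by (simp add: is_root_def)
    ultimately show ?thesis using \<rho> unfolding V'_def by blast
  qed
  have tsy: "t s < t y"
    using H(1)[OF sy] H(2)[OF sy] leaf_not_ret[OF yl] by force
  have trx: "t r < t x"
    using H(1)[OF rx] H(2)[OF rx] leaf_not_ret[OF xl] by force
  have new: "\<And>u w. (u,w) \<in> A' \<Longrightarrow> (u,w) \<notin> A \<Longrightarrow> t u < t w \<and> \<not> is_reticulation (V,A) w"
  proof -
    fix u w assume "(u,w) \<in> A'" "(u,w) \<notin> A"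
    hence "(u = g \<and> w = y) \<or> (u = q \<and> w = x)" using memA'[of u w] by auto
    thus "t u < t w \<and> \<not> is_reticulation (V,A) w"
      using H(1)[OF gs] H(1)[OF qr] tsy trx leaf_not_ret[OF yl] leaf_not_ret[OF xl] by auto
  qed
  have lost: "\<And>u w. u \<in> V' \<Longrightarrow> (u,w) \<in> A \<Longrightarrow> (u,w) \<notin> A' \<Longrightarrow> \<exists>w'. (u,w') \<in> A' \<and> t w \<le> t w'"
  proof -
    fix u w assume "u \<in> V'" "(u,w) \<in> A" "(u,w) \<notin> A'"
    hence "u \<noteq> s" "u \<noteq> r" "(u,w) \<in> A" "(u,w) \<notin> A'" unfolding V'_def by auto
    hence "(u = g \<and> w = s) \<or> (u = q \<and> w = r)" using memA'[of u w] by auto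
    moreover have "(g,y) \<in> A'" "(q,x) \<in> A'" using memA' by simp_all
    ultimately show "\<exists>w'. (u,w') \<in> A' \<and> t w \<le> t w'" using tsy trx by force
  qed
  have res: "is_binary (V',A') \<and> hgt_consistent (V',A') t"
    by (rule surgery[OF bin hgt _ sub2 sub3 deg root new lost]) (auto simp: V'_def)
  have "V' \<subset> V" using sV unfolding V'_def by auto
  hence "card V' < card V" using bin_net(1)[OF bin] psubset_card_mono by blast
  thus ?thesis using res e1 e2 e3 e4 e5 by auto
qed

lemma orchard_step:
  assumes "reduce_pair N xy = N'" "orchard N'" shows "orchard N"
proof -
  obtain S where "is_tree (reduce_seq N' S) \<and> card (leaves (reduce_seq N' S)) = 1"
    using assms(2) unfolding orchard_def by blast
  moreover have "reduce_seq N (xy # S) = reduce_seq N' S"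
    using assms(1) unfolding reduce_seq_def by simp
  ultimately show ?thesis unfolding orchard_def by metis
qed

lemma main_lemma:
  "is_binary (V,A) \<Longrightarrow> hgt_consistent (V,A) t \<Longrightarrow> orchard (V,A)"
proof (induction "card V" arbitrary: V A rule: less_induct)
  case less
  note bin = less.prems(1) and hgt = less.prems(2)
  show ?case
  proof (cases "\<exists>u\<in>V. internal (V,A) u \<and> \<not> is_root (V,A) u")
    case False
    thus ?thesis using base_case[OF bin] by blast
  next
    case True
    then obtain x y where xy: "is_cherry (V,A) x y \<or> is_ret_cherry (V,A) x y"
      using pair_exists[OF bin hgt] by blast
    obtain V' A' where r: "reduce_pair (V,A) (x,y) = (V',A')" "is_binary (V',A')"
      "hgt_consistent (V',A') t" "card V' < card V"
      using xy cherry_red[OF bin hgt] ret_red[OF bin hgt] by blast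
    have "orchard (V',A')" using less.hyps[OF r(4) r(2) r(3)] .
    thus ?thesis using orchard_step[OF r(1)] by blast
  qed
qed

theorem mainTheorem4:
  fixes N :: "'a graph"
  assumes "is_binary N"
    and "\<exists>t. hgt_consistent N t"
  shows "orchard N"
proof -
  obtain t where t: "hgt_consistent N t" using assms(2) by blast
  obtain V A where N: "N = (V,A)" by (cases N)
  show ?thesis using main_lemma[of V A t] assms(1) t N by simp
qed

end
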